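(* Let $\alpha(n)$ be a sequence of positive reals and fix a positive integer $d$. Suppose there are real sequences $R(n)$, $\delta(n)>0$ and $C_r(n)$ ($0\le r\le d$) such that $\delta(n)\to0$, $C_r(n)\to c_r$, and, as $n\to\infty$, $$\frac{\alpha(n+j)}{\alpha(n)R(n)^j}=\sum_{r=0}^dC_r(n)\delta(n)^rj^r+o(\delta(n)^d)$$ for $j=1,\dots,d$. Let $R^*(n)$ and $\delta^*(n)>0$ be real sequences with $$R^*(n)=R(n)(1+o(\delta(n))),\qquad \delta^*(n)=\delta(n)(1+o(1))\qquad(n\to\infty).$$ Then there exist real sequences $C^*_r(n)$ with $C^*_r(n)\to c_r$ for each $r$, such that $$\frac{\alpha(n+j)}{\alpha(n)R^*(n)^j}=\sum_{r=0}^dC^*_r(n)\delta^*(n)^rj^r+o(\delta^*(n)^d)$$ as $n\to\infty$, for $j=1,\dots,d$. *)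

theory Defs
  imports "HOL-Analysis.Analysis" "HOL-Library.Landau_Symbols"
begin

end

theory Submission
  imports Defs
begin

theorem proposition4p4:
  fixes \<alpha> R \<delta> Rs \<delta>s :: "nat \<Rightarrow> real"
    and C :: "nat \<Rightarrow> nat \<Rightarrow> real" and c :: "nat \<Rightarrow> real" and d :: nat
  assumes alpha_pos: "\<And>n. \<alpha> n > 0"
    and d_pos: "d \<ge> 1"
    and delta_pos: "\<And>n. \<delta> n > 0"
    and delta_lim: "\<delta> \<longlonglongrightarrow> 0"
    and C_lim: "\<And>r. r \<le> d \<Longrightarrow> (\<lambda>n. C r n) \<longlonglongrightarrow> c r"
    and expansion: "\<And>j. j \<in> {1..d} \<Longrightarrow>
        (\<lambda>n. \<alpha> (n + j) / (\<alpha> n * R n ^ j)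
              - (\<Sum>r\<le>d. C r n * \<delta> n ^ r * real j ^ r))
        \<in> o(\<lambda>n. \<delta> n ^ d)"
    and Rs_asymp: "\<exists>\<epsilon>. \<epsilon> \<in> o(\<delta>) \<and> (\<forall>\<^sub>F n in sequentially. Rs n = R n * (1 + \<epsilon> n))"
    and deltas_pos: "\<And>n. \<delta>s n > 0"
    and deltas_asymp: "\<exists>\<eta>. \<eta> \<longlonglongrightarrow> 0 \<and> (\<forall>\<^sub>F n in sequentially. \<delta>s n = \<delta> n * (1 + \<eta> n))"
  shows "\<exists>Cs :: nat \<Rightarrow> nat \<Rightarrow> real.
           (\<forall>r\<le>d. (\<lambda>n. Cs r n) \<longlonglongrightarrow> c r) \<and>
           (\<forall>j\<in>{1..d}.
              (\<lambda>n. \<alpha> (n + j) / (\<alpha> n * Rs n ^ j)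
                    - (\<Sum>r\<le>d. Cs r n * \<delta>s n ^ r * real j ^ r))
              \<in> o(\<lambda>n. \<delta>s n ^ d))"
proof -
  obtain \<epsilon> where eps_o: "\<epsilon> \<in> o(\<delta>)" and eps_ev: "\<forall>\<^sub>F n in sequentially. Rs n = R n * (1 + \<epsilon> n)"
    using Rs_asymp by blast
  obtain \<eta> where eta_lim: "\<eta> \<longlonglongrightarrow> 0" and eta_ev: "\<forall>\<^sub>F n in sequentially. \<delta>s n = \<delta> n * (1 + \<eta> n)"
    using deltas_asymp by blast
  have dne: "\<delta> n \<noteq> 0" for n using delta_pos[of n] by simp
  have dsne: "\<delta>s n \<noteq> 0" for n using deltas_pos[of n] by simp
  have epsdel: "(\<lambda>n. \<epsilon> n / \<delta> n) \<longlonglongrightarrow> 0" using smalloD_tendsto[OF eps_o] .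
  have eps_lim: "\<epsilon> \<longlonglongrightarrow> 0"
  proof -
    have "(\<lambda>n. \<epsilon> n / \<delta> n * \<delta> n) \<longlonglongrightarrow> 0 * 0" by (intro tendsto_mult epsdel delta_lim)
    moreover have "\<And>n. \<epsilon> n / \<delta> n * \<delta> n = \<epsilon> n" using dne by simp
    ultimately show ?thesis by simp
  qed
  define \<rho> where "\<rho> n = \<delta> n / \<delta>s n" for n
  have rho_lim: "\<rho> \<longlonglongrightarrow> 1"
  proof -
    have "(\<lambda>n. 1 / (1 + \<eta> n)) \<longlonglongrightarrow> 1 / (1 + 0)" by (intro tendsto_intros eta_lim) simp
    moreover have "\<forall>\<^sub>F n in sequentially. 1 / (1 + \<eta> n) = \<rho> n"
      using eta_ev by eventually_elim (use dne in \<open>auto simp: \<rho>_def\<close>)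
    ultimately show ?thesis using Lim_transform_eventually by fastforce
  qed
  have ds_lim: "\<delta>s \<longlonglongrightarrow> 0"
  proof -
    have "(\<lambda>n. \<delta> n * (1 + \<eta> n)) \<longlonglongrightarrow> 0 * (1 + 0)" by (intro tendsto_intros eta_lim delta_lim)
    moreover have "\<forall>\<^sub>F n in sequentially. \<delta> n * (1 + \<eta> n) = \<delta>s n"
      using eta_ev by eventually_elim simp
    ultimately show ?thesis using Lim_transform_eventually by fastforce
  qed
  define L where "L n = ln (1 + \<epsilon> n)" for n
  define lam where "lam n = L n / \<delta>s n" for n
  have eps_small: "\<forall>\<^sub>F n in sequentially. \<bar>\<epsilon> n\<bar> \<le> 1/2"
  proof -
    have "\<forall>\<^sub>F n in sequentially. dist (\<epsilon> n) 0 < 1/2" by (rule tendstoD[OF eps_lim]) simp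
    thus ?thesis by eventually_elim simp
  qed
  have lam_lim: "lam \<longlonglongrightarrow> 0"
  proof (rule Lim_null_comparison)
    show "(\<lambda>n. 2 * \<bar>\<epsilon> n / \<delta> n\<bar> * \<rho> n) \<longlonglongrightarrow> 0"
      using tendsto_mult[OF tendsto_mult[OF tendsto_const tendsto_rabs[OF epsdel]] rho_lim, of 2] by simp
    show "\<forall>\<^sub>F n in sequentially. norm (lam n) \<le> 2 * \<bar>\<epsilon> n / \<delta> n\<bar> * \<rho> n"
      using eps_small
    proof eventually_elim
      case (elim n)
      have "\<bar>L n - \<epsilon> n\<bar> \<le> 2 * (\<epsilon> n)\<^sup>2" unfolding L_def
        by (rule abs_ln_one_plus_x_minus_x_bound) (use elim in simp)
      moreover have "2 * (\<epsilon> n)\<^sup>2 \<le> \<bar>\<epsilon> n\<bar>"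
      proof -
        have "2 * (\<epsilon> n)\<^sup>2 = 2 * \<bar>\<epsilon> n\<bar> * \<bar>\<epsilon> n\<bar>" by (simp add: power2_eq_square)
        also have "\<dots> \<le> 2 * (1/2) * \<bar>\<epsilon> n\<bar>" by (intro mult_right_mono) (use elim in auto)
        finally show ?thesis by simp
      qed
      ultimately have "\<bar>L n\<bar> \<le> 2 * \<bar>\<epsilon> n\<bar>" by linarith
      hence "\<bar>L n\<bar> / \<delta>s n \<le> 2 * \<bar>\<epsilon> n\<bar> / \<delta>s n"
        using deltas_pos[of n] by (simp add: divide_right_mono)
      also have "2 * \<bar>\<epsilon> n\<bar> / \<delta>s n = 2 * \<bar>\<epsilon> n / \<delta> n\<bar> * \<rho> n"
        using delta_pos[of n] dsne[of n] by (simp add: \<rho>_def abs_divide)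
      finally show ?case using deltas_pos[of n] by (simp add: lam_def abs_divide)
    qed
  qed
  have L_lim: "L \<longlonglongrightarrow> 0"
  proof -
    have "(\<lambda>n. lam n * \<delta>s n) \<longlonglongrightarrow> 0 * 0" by (intro tendsto_mult lam_lim ds_lim)
    moreover have "\<And>n. lam n * \<delta>s n = L n" using dsne by (simp add: lam_def)
    ultimately show ?thesis by simp
  qed
  define Cp where "Cp r n = C r n * \<rho> n ^ r" for r n
  have Cp_lim: "(\<lambda>n. Cp r n) \<longlonglongrightarrow> c r" if "r \<le> d" for r
    using tendsto_mult[OF C_lim[OF that] tendsto_power[OF rho_lim, of r]] by (simp add: Cp_def)
  define B where "B k n = (- lam n) ^ k / fact k" for k n
  have B_lim: "(\<lambda>n. B k n) \<longlonglongrightarrow> (if k = 0 then 1 else 0)" for k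
  proof (cases "k = 0")
    case True then show ?thesis by (simp add: B_def)
  next
    case False
    have "(\<lambda>n. (- lam n) ^ k / fact k) \<longlonglongrightarrow> (- 0) ^ k / fact k" by (intro tendsto_intros lam_lim) auto
    moreover have "(- 0::real) ^ k / fact k = 0" using False by simp
    ultimately show ?thesis unfolding B_def if_not_P[OF False] by metis
  qed
  define Cs where "Cs m n = (\<Sum>r\<le>d. \<Sum>k\<le>d. if r + k = m then Cp r n * B k n else 0)" for m n
  have Cs_lim: "(\<lambda>n. Cs m n) \<longlonglongrightarrow> c m" if "m \<le> d" for m
  proof -
    have "(\<lambda>n. Cs m n) \<longlonglongrightarrow> (\<Sum>r\<le>d. \<Sum>k\<le>d. if r + k = m then c r * (if k = 0 then 1 else 0) else 0)"
      unfolding Cs_def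
    proof (intro tendsto_sum)
      fix r k assume "r \<in> {..d}" "k \<in> {..d}"
      hence "(\<lambda>n. Cp r n * B k n) \<longlonglongrightarrow> c r * (if k = 0 then 1 else 0)"
        by (intro tendsto_mult Cp_lim B_lim) auto
      thus "(\<lambda>n. if r + k = m then Cp r n * B k n else 0) \<longlonglongrightarrow> (if r + k = m then c r * (if k = 0 then 1 else 0) else 0)"
        by (cases "r + k = m") auto
    qed
    also have "(\<Sum>r\<le>d. \<Sum>k\<le>d. if r + k = m then c r * (if k = 0 then 1 else (0::real)) else 0) = (\<Sum>r\<le>d. if r = m then c r else 0)"
    proof (rule sum.cong[OF refl])
      fix r assume "r \<in> {..d}"
      have "(\<Sum>k\<le>d. if r + k = m then c r * (if k = 0 then 1 else (0::real)) else 0) = (\<Sum>k\<le>d. if k = 0 then (if r = m then c r else 0) else 0)"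
        by (rule sum.cong) auto
      also have "\<dots> = (if r = m then c r else 0)" by simp
      finally show "(\<Sum>k\<le>d. if r + k = m then c r * (if k = 0 then 1 else (0::real)) else 0) = (if r = m then c r else 0)" .
    qed
    also have "\<dots> = c m" using that by simp
    finally show ?thesis .
  qed
  show ?thesis
  proof (intro exI[of _ Cs] conjI allI impI ballI)
    fix r assume "r \<le> d" then show "(\<lambda>n. Cs r n) \<longlonglongrightarrow> c r" by (rule Cs_lim)
  next
    fix j assume j: "j \<in> {1..d}"
    define F where "F n = \<alpha> (n + j) / (\<alpha> n * R n ^ j)" for n
    define Fs where "Fs n = \<alpha> (n + j) / (\<alpha> n * Rs n ^ j)" for n
    define P where "P n = (\<Sum>r\<le>d. Cp r n * \<delta>s n ^ r * real j ^ r)" for n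
    define Q where "Q n = (\<Sum>k\<le>d. B k n * \<delta>s n ^ k * real j ^ k)" for n
    define X where "X n = exp (- (real j * L n))" for n
    have P_eq: "P n = (\<Sum>r\<le>d. C r n * \<delta> n ^ r * real j ^ r)" for n
      unfolding P_def
    proof (rule sum.cong[OF refl])
      fix r
      have "Cp r n * \<delta>s n ^ r = C r n * (\<rho> n * \<delta>s n) ^ r" by (simp add: Cp_def power_mult_distrib)
      also have "\<rho> n * \<delta>s n = \<delta> n" using dsne[of n] by (simp add: \<rho>_def)
      finally show "Cp r n * \<delta>s n ^ r * real j ^ r = C r n * \<delta> n ^ r * real j ^ r" by simp
    qed
    have E1: "(\<lambda>n. (F n - P n) / \<delta>s n ^ d) \<longlonglongrightarrow> 0"
    proof -
      have a: "(\<lambda>n. (F n - P n) / \<delta> n ^ d) \<longlonglongrightarrow> 0"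
        using smalloD_tendsto[OF expansion[OF j]] by (simp add: F_def P_eq)
      have "(\<lambda>n. (F n - P n) / \<delta> n ^ d * \<rho> n ^ d) \<longlonglongrightarrow> 0 * 1 ^ d"
        by (intro tendsto_mult tendsto_power a rho_lim)
      moreover have "(F n - P n) / \<delta> n ^ d * \<rho> n ^ d = (F n - P n) / \<delta>s n ^ d" for n
        using dne[of n] dsne[of n] by (simp add: \<rho>_def power_divide)
      ultimately show ?thesis by simp
    qed
    have P_lim: "(\<lambda>n. P n) \<longlonglongrightarrow> c 0"
    proof -
      have "(\<lambda>n. P n) \<longlonglongrightarrow> (\<Sum>r\<le>d. c r * 0 ^ r * real j ^ r)"
        unfolding P_def by (intro tendsto_sum tendsto_mult tendsto_power Cp_lim ds_lim tendsto_const) auto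
      also have "(\<Sum>r\<le>d. c r * 0 ^ r * real j ^ r) = (\<Sum>r\<le>d. if r = 0 then c 0 else 0)"
        by (intro sum.cong refl) auto
      also have "\<dots> = c 0" by simp
      finally show ?thesis .
    qed
    have X_lim: "(\<lambda>n. X n) \<longlonglongrightarrow> 1"
    proof -
      have "(\<lambda>n. exp (- (real j * L n))) \<longlonglongrightarrow> exp (- (real j * 0))" by (intro tendsto_intros L_lim)
      thus ?thesis by (simp add: X_def)
    qed
    have Fs_eq: "\<forall>\<^sub>F n in sequentially. Fs n = F n * X n"
      using eps_ev eps_small
    proof eventually_elim
      case (elim n)
      have pos: "1 + \<epsilon> n > 0" using elim(2) by linarith
      have "X n = inverse ((1 + \<epsilon> n) ^ j)"
        using pos by (simp add: X_def L_def exp_minus exp_of_nat_mult)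
      then show "Fs n = F n * X n"
        by (simp add: Fs_def F_def elim(1) power_mult_distrib divide_inverse mult_ac)
    qed
    have Q_eq: "Q n = (\<Sum>k<Suc d. (- (real j * L n)) ^ k / fact k)" for n
      unfolding Q_def lessThan_Suc_atMost
    proof (rule sum.cong[OF refl])
      fix k
      have "L n = lam n * \<delta>s n" using dsne[of n] by (simp add: lam_def)
      hence e: "- (real j * L n) = (- lam n) * \<delta>s n * real j" by simp
      show "B k n * \<delta>s n ^ k * real j ^ k = (- (real j * L n)) ^ k / fact k"
        unfolding e B_def power_mult_distrib by simp
    qed
    have glim: "(\<lambda>n. exp (\<bar>real j * L n\<bar>) / fact (Suc d) * (real j * \<bar>lam n\<bar>) ^ Suc d * \<delta>s n) \<longlonglongrightarrow> 0"
    proof -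
      have "(\<lambda>n. exp (\<bar>real j * L n\<bar>) / fact (Suc d) * (real j * \<bar>lam n\<bar>) ^ Suc d * \<delta>s n)
         \<longlonglongrightarrow> exp (\<bar>real j * 0\<bar>) / fact (Suc d) * (real j * \<bar>0\<bar>) ^ Suc d * 0"
        by (intro tendsto_intros L_lim lam_lim ds_lim) auto
      thus ?thesis by simp
    qed
    have E2: "(\<lambda>n. (X n - Q n) / \<delta>s n ^ d) \<longlonglongrightarrow> 0"
    proof (rule Lim_null_comparison[OF _ glim], rule always_eventually, rule allI)
      fix n
      define x where "x = - (real j * L n)"
      obtain \<tau> where tau: "\<bar>\<tau>\<bar> \<le> \<bar>x\<bar>" "exp x = (\<Sum>m<Suc d. x ^ m / fact m) + exp \<tau> / fact (Suc d) * x ^ Suc d"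
        using Maclaurin_exp_le by blast
      have xa: "\<bar>x\<bar> = real j * \<bar>lam n\<bar> * \<delta>s n"
        using deltas_pos[of n] dsne[of n] by (simp add: x_def lam_def abs_mult)
      have XQ: "X n - Q n = exp \<tau> / fact (Suc d) * x ^ Suc d"
        using tau(2) by (simp add: X_def Q_eq x_def)
      have "norm ((X n - Q n) / \<delta>s n ^ d) = exp \<tau> / fact (Suc d) * \<bar>x\<bar> ^ Suc d / \<delta>s n ^ d"
        using deltas_pos[of n] unfolding XQ by (simp add: abs_mult power_abs abs_divide)
      also have "\<dots> = exp \<tau> / fact (Suc d) * (\<bar>x\<bar> ^ Suc d / \<delta>s n ^ d)" by simp
      also have "\<bar>x\<bar> ^ Suc d / \<delta>s n ^ d = (real j * \<bar>lam n\<bar>) ^ Suc d * \<delta>s n"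
        unfolding xa using dsne[of n] by (simp add: power_mult_distrib)
      also have "exp \<tau> / fact (Suc d) * ((real j * \<bar>lam n\<bar>) ^ Suc d * \<delta>s n) = exp \<tau> / fact (Suc d) * (real j * \<bar>lam n\<bar>) ^ Suc d * \<delta>s n"
        by simp
      also have "\<dots> \<le> exp (\<bar>real j * L n\<bar>) / fact (Suc d) * (real j * \<bar>lam n\<bar>) ^ Suc d * \<delta>s n"
      proof -
        have "exp \<tau> \<le> exp (\<bar>real j * L n\<bar>)" using tau(1) by (simp add: x_def)
        thus ?thesis using deltas_pos[of n]
          by (intro mult_right_mono divide_right_mono) auto
      qed
      finally show "norm ((X n - Q n) / \<delta>s n ^ d) \<le> exp (\<bar>real j * L n\<bar>) / fact (Suc d) * (real j * \<bar>lam n\<bar>) ^ Suc d * \<delta>s n" .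
    qed
    define Rem where "Rem n = (\<Sum>r\<le>d. \<Sum>k\<le>d. if r + k \<le> d then 0 else Cp r n * B k n * \<delta>s n ^ (r + k) * real j ^ (r + k))" for n
    have PQ: "P n * Q n = (\<Sum>m\<le>d. Cs m n * \<delta>s n ^ m * real j ^ m) + Rem n" for n
    proof -
      have S1: "P n * Q n = (\<Sum>r\<le>d. \<Sum>k\<le>d. Cp r n * B k n * \<delta>s n ^ (r+k) * real j ^ (r+k))"
        unfolding P_def Q_def sum_product by (intro sum.cong refl) (simp add: power_add mult_ac)
      have "(\<Sum>m\<le>d. Cs m n * \<delta>s n ^ m * real j ^ m)
          = (\<Sum>m\<le>d. \<Sum>r\<le>d. \<Sum>k\<le>d. if r + k = m then Cp r n * B k n * \<delta>s n ^ m * real j ^ m else 0)"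
        unfolding Cs_def sum_distrib_right by (intro sum.cong refl) auto
      also have "\<dots> = (\<Sum>r\<le>d. \<Sum>m\<le>d. \<Sum>k\<le>d. if r + k = m then Cp r n * B k n * \<delta>s n ^ m * real j ^ m else 0)"
        by (rule sum.swap)
      also have "\<dots> = (\<Sum>r\<le>d. \<Sum>k\<le>d. \<Sum>m\<le>d. if r + k = m then Cp r n * B k n * \<delta>s n ^ m * real j ^ m else 0)"
        by (intro sum.cong refl sum.swap)
      also have "\<dots> = (\<Sum>r\<le>d. \<Sum>k\<le>d. if r + k \<le> d then Cp r n * B k n * \<delta>s n ^ (r+k) * real j ^ (r+k) else 0)"
        by (intro sum.cong refl) (simp add: sum.delta)
      finally have S2: "(\<Sum>m\<le>d. Cs m n * \<delta>s n ^ m * real j ^ m) = \<dots>" .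
      show ?thesis unfolding S1 S2 Rem_def sum.distrib[symmetric]
        by (intro sum.cong refl) auto
    qed
    have Rem_lim: "(\<lambda>n. Rem n / \<delta>s n ^ d) \<longlonglongrightarrow> 0"
    proof -
      have eq: "Rem n / \<delta>s n ^ d = (\<Sum>r\<le>d. \<Sum>k\<le>d. if r + k \<le> d then 0 else Cp r n * B k n * \<delta>s n ^ (r + k - d) * real j ^ (r + k))" for n
        unfolding Rem_def sum_divide_distrib
        by (intro sum.cong refl) (use dsne[of n] in \<open>auto simp: power_diff\<close>)
      have "(\<lambda>n. (\<Sum>r\<le>d. \<Sum>k\<le>d. if r + k \<le> d then 0 else Cp r n * B k n * \<delta>s n ^ (r + k - d) * real j ^ (r + k))) \<longlonglongrightarrow> (\<Sum>r\<le>d. \<Sum>k\<le>d. (0::real))"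
      proof (intro tendsto_sum)
        fix r k assume rk: "r \<in> {..d}" "k \<in> {..d}"
        show "(\<lambda>n. if r + k \<le> d then 0 else Cp r n * B k n * \<delta>s n ^ (r + k - d) * real j ^ (r + k)) \<longlonglongrightarrow> 0"
        proof (cases "r + k \<le> d")
          case False
          have "(\<lambda>n. Cp r n * B k n * \<delta>s n ^ (r + k - d) * real j ^ (r + k)) \<longlonglongrightarrow> c r * (if k = 0 then 1 else 0) * 0 ^ (r + k - d) * real j ^ (r + k)"
            using rk by (intro tendsto_intros Cp_lim B_lim ds_lim) auto
          moreover have "(0::real) ^ (r + k - d) = 0" using False by simp
          ultimately show ?thesis using False by simp
        qed simp
      qed
      then show ?thesis unfolding eq by simp
    qed
    have main: "(\<lambda>n. (Fs n - (\<Sum>r\<le>d. Cs r n * \<delta>s n ^ r * real j ^ r)) / \<delta>s n ^ d) \<longlonglongrightarrow> 0"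
    proof -
      have "(\<lambda>n. (F n - P n) / \<delta>s n ^ d * X n + P n * ((X n - Q n) / \<delta>s n ^ d) + Rem n / \<delta>s n ^ d) \<longlonglongrightarrow> 0 * 1 + c 0 * 0 + 0"
        by (intro tendsto_intros E1 X_lim P_lim E2 Rem_lim)
      moreover have "\<forall>\<^sub>F n in sequentially. (F n - P n) / \<delta>s n ^ d * X n + P n * ((X n - Q n) / \<delta>s n ^ d) + Rem n / \<delta>s n ^ d
          = (Fs n - (\<Sum>r\<le>d. Cs r n * \<delta>s n ^ r * real j ^ r)) / \<delta>s n ^ d"
        using Fs_eq
      proof eventually_elim
        case (elim n)
        have "Fs n - (\<Sum>r\<le>d. Cs r n * \<delta>s n ^ r * real j ^ r) = (F n - P n) * X n + P n * (X n - Q n) + Rem n"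
          using elim PQ[of n] by (simp add: algebra_simps)
        then show ?case using dsne[of n] by (simp add: field_simps)
      qed
      ultimately show ?thesis using Lim_transform_eventually by fastforce
    qed
    show "(\<lambda>n. \<alpha> (n + j) / (\<alpha> n * Rs n ^ j) - (\<Sum>r\<le>d. Cs r n * \<delta>s n ^ r * real j ^ r)) \<in> o(\<lambda>n. \<delta>s n ^ d)"
      by (rule smalloI_tendsto) (use main dsne in \<open>simp_all add: Fs_def\<close>)
  qed
qed

end
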